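(* Let $\mathcal{A}\in\mathbb{C}^{n\times n\times n\times n}$ be a CPS tensor that is also symmetric. Then $\mathcal{A}(x,x,\bar x,\bar x)=\sum_{i,j,k,l}\mathcal{A}_{ijkl}x_ix_j\bar x_k\bar x_l\ge0$ for all $x\in\mathbb{C}^n$ if and only if $\langle X,\mathcal{A}X\rangle\ge0$ for all Hermitian positive semidefinite $X\in\mathbb{C}^{n\times n}$.
   Context: A tensor $\mathcal{A}\in\mathbb{C}^{n\times n\times n\times n}$ is conjugate partial-symmetric (CPS) if $\mathcal{A}_{ijkl}=\overline{\mathcal{A}_{klij}}$ and $\mathcal{A}_{ijkl}=\mathcal{A}_{jikl}=\mathcal{A}_{ijlk}$ for all indices; it is symmetric if its entries are invariant under all permutations of the four indices. For $X\in\mathbb{C}^{n\times n}$, $\langle X,\mathcal{A}X\rangle=\sum_{i,j,k,l}\mathcal{A}_{ijkl}X_{kl}\overline{X_{ij}}$. *)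

theory Defs
  imports "HOL-Analysis.Analysis" "HOL-Library.Complex_Order"
begin

text \<open>Fourth-order tensors of dimension n are represented as functions
  nat => nat => nat => nat => complex, with indices ranging over {..<n}.
  Vectors are nat => complex, matrices nat => nat => complex.\<close>

definition CPS_tensor :: "nat \<Rightarrow> (nat \<Rightarrow> nat \<Rightarrow> nat \<Rightarrow> nat \<Rightarrow> complex) \<Rightarrow> bool" where
  "CPS_tensor n A \<longleftrightarrow> (\<forall>i<n. \<forall>j<n. \<forall>k<n. \<forall>l<n.
      A i j k l = cnj (A k l i j) \<and> A i j k l = A j i k l \<and> A i j k l = A i j l k)"

definition symmetric_tensor :: "nat \<Rightarrow> (nat \<Rightarrow> nat \<Rightarrow> nat \<Rightarrow> nat \<Rightarrow> complex) \<Rightarrow> bool" where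
  "symmetric_tensor n A \<longleftrightarrow> (\<forall>i<n. \<forall>j<n. \<forall>k<n. \<forall>l<n.
      A i j k l = A j i k l \<and> A i j k l = A j k i l \<and> A i j k l = A i j l k
      \<and> A i j k l = A l j k i \<and> A i j k l = A k j i l \<and> A i j k l = A i k j l
      \<and> A i j k l = A i l k j)"

definition tensor_form :: "nat \<Rightarrow> (nat \<Rightarrow> nat \<Rightarrow> nat \<Rightarrow> nat \<Rightarrow> complex) \<Rightarrow> (nat \<Rightarrow> complex) \<Rightarrow> complex" where
  "tensor_form n A x = (\<Sum>i<n. \<Sum>j<n. \<Sum>k<n. \<Sum>l<n. A i j k l * x i * x j * cnj (x k) * cnj (x l))"

definition tensor_matrix_inner :: "nat \<Rightarrow> (nat \<Rightarrow> nat \<Rightarrow> complex) \<Rightarrow> (nat \<Rightarrow> nat \<Rightarrow> nat \<Rightarrow> nat \<Rightarrow> complex) \<Rightarrow> complex" where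
  "tensor_matrix_inner n X A = (\<Sum>i<n. \<Sum>j<n. \<Sum>k<n. \<Sum>l<n. A i j k l * X k l * cnj (X i j))"

definition hermitian_psd :: "nat \<Rightarrow> (nat \<Rightarrow> nat \<Rightarrow> complex) \<Rightarrow> bool" where
  "hermitian_psd n X \<longleftrightarrow> (\<forall>i<n. \<forall>j<n. X i j = cnj (X j i)) \<and>
     (\<forall>v :: nat \<Rightarrow> complex. (\<Sum>i<n. \<Sum>j<n. cnj (v i) * X i j * v j) \<ge> 0)"

end

theory Submission
  imports Defs "HOL-Library.FuncSet"
begin


definition qf :: "nat \<Rightarrow> (nat \<Rightarrow> nat \<Rightarrow> complex) \<Rightarrow> (nat \<Rightarrow> complex) \<Rightarrow> complex" where
  "qf n X v = (\<Sum>i<n. \<Sum>j<n. cnj (v i) * X i j * v j)"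

lemma mult_if0_r: "(a::complex) * (if P then b else 0) = (if P then a * b else 0)" by simp
lemma mult_if0_l: "(if P then b else 0) * (a::complex) = (if P then b * a else 0)" by simp
lemma sum_if0: "(\<Sum>j\<in>A. if P then f j else (0::complex)) = (if P then (\<Sum>j\<in>A. f j) else 0)" by simp

lemma qf_update:
  assumes "p < n"
  shows "qf n X (\<lambda>i. v i + (if i = p then t else 0)) =
    qf n X v + cnj t * (\<Sum>j<n. X p j * v j) + (\<Sum>i<n. cnj (v i) * X i p) * t + cnj t * X p p * t"
proof -
  have "qf n X (\<lambda>i. v i + (if i = p then t else 0)) =
     (\<Sum>i<n. \<Sum>j<n. cnj (v i) * X i j * v j) + (\<Sum>i<n. \<Sum>j<n. cnj (v i) * X i j * (if j = p then t else 0))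
     + (\<Sum>i<n. \<Sum>j<n. (if i = p then cnj t else 0) * X i j * v j)
     + (\<Sum>i<n. \<Sum>j<n. (if i = p then cnj t else 0) * X i j * (if j = p then t else 0))"
    unfolding qf_def by (simp add: algebra_simps sum.distrib if_distrib[of cnj] cong: if_cong)
  also have "\<dots> = qf n X v + (\<Sum>i<n. cnj (v i) * X i p) * t + cnj t * (\<Sum>j<n. X p j * v j) + cnj t * X p p * t"
    using assms unfolding qf_def
    by (simp only: mult_if0_r mult_if0_l sum_if0 sum.delta sum.delta' finite_lessThan lessThan_iff if_True
          sum_distrib_left sum_distrib_right mult.assoc mult_zero_left mult_zero_right)
  finally show ?thesis by simp
qed

lemma psd_qf: "hermitian_psd n X \<longleftrightarrow> (\<forall>i<n. \<forall>j<n. X i j = cnj (X j i)) \<and> (\<forall>v. qf n X v \<ge> 0)"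
  unfolding hermitian_psd_def qf_def by simp

lemma qf_unit: assumes "k < n" shows "qf n X (\<lambda>i. if i = k then 1 else 0) = X k k"
  using assms unfolding qf_def
  by (simp add: if_distrib[of cnj] mult_if0_r mult_if0_l sum_if0 cong: if_cong)

lemma sum_unit_r: assumes "k < (n::nat)" shows "(\<Sum>j<n. F j * (if j = k then 1 else 0)) = (F k :: complex)"
  using assms by (simp add: mult_if0_r)

lemma sum_unit_l: assumes "k < (n::nat)" shows "(\<Sum>j<n. cnj (if j = k then 1 else 0) * F j) = (F k :: complex)"
  using assms by (simp add: if_distrib[of cnj] mult_if0_l cong: if_cong)

lemma complex_ge0_iff: "(z::complex) \<ge> 0 \<longleftrightarrow> Re z \<ge> 0 \<and> Im z = 0"
  by (simp add: less_eq_complex_def)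

lemma psd_zero_diag:
  assumes H: "hermitian_psd n X" and "p < n" "k < n" and Z: "X p p = 0"
  shows "X p k = 0"
proof (cases "k = p")
  case True then show ?thesis using Z by simp
next
  case False
  define c where "c = X k p"
  have herm: "\<And>i j. i < n \<Longrightarrow> j < n \<Longrightarrow> X i j = cnj (X j i)" and pos: "\<And>v. qf n X v \<ge> 0"
  proof -
    have h: "(\<forall>i<n. \<forall>j<n. X i j = cnj (X j i)) \<and> (\<forall>v. qf n X v \<ge> 0)" using H psd_qf by blast
    show "\<And>i j. i < n \<Longrightarrow> j < n \<Longrightarrow> X i j = cnj (X j i)" "\<And>v. qf n X v \<ge> 0" using h by blast+
  qed
  have Xpk: "X p k = cnj c" unfolding c_def by (rule herm[OF \<open>p < n\<close> \<open>k < n\<close>])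
  show ?thesis
  proof (rule ccontr)
    assume ne: "X p k \<noteq> 0"
    hence cne: "c \<noteq> 0" using Xpk by auto
    define N where "N = (Re c)^2 + (Im c)^2"
    have cpos: "N > 0" using cne unfolding N_def
      by (metis complex_eq_iff sum_power2_gt_zero_iff zero_complex.simps)
    have ccn: "c * cnj c = complex_of_real N" unfolding N_def by (rule complex_mult_cnj)
    define r where "r = (\<bar>Re (X k k)\<bar> + 1) / (2 * N)"
    define t where "t = - complex_of_real r * cnj c"
    have ct: "cnj t = - complex_of_real r * c" unfolding t_def by simp
    have s1: "(\<Sum>j<n. X p j * (if j = k then 1 else 0)) = X p k" by (rule sum_unit_r[OF \<open>k < n\<close>])
    have s2: "(\<Sum>i<n. cnj (if i = k then 1 else 0) * X i p) = X k p" by (rule sum_unit_l[OF \<open>k < n\<close>])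
    have "qf n X (\<lambda>i. (if i = k then 1 else 0) + (if i = p then t else 0)) =
          X k k + cnj t * X p k + X k p * t + cnj t * X p p * t"
      using qf_update[OF \<open>p < n\<close>, of X "\<lambda>i. if i = k then 1 else 0" t]
      unfolding s1 s2 qf_unit[OF \<open>k < n\<close>] .
    also have "\<dots> = X k k - 2 * complex_of_real r * (c * cnj c)"
      unfolding ct Z Xpk unfolding t_def c_def[symmetric] by (simp add: algebra_simps)
    also have "\<dots> = X k k - complex_of_real (2 * r * N)"
      unfolding ccn by simp
    finally have "Re (X k k) - 2 * r * N \<ge> 0"
      using pos[of "\<lambda>i. (if i = k then 1 else 0) + (if i = p then t else 0)"]
      by (simp add: complex_ge0_iff)
    moreover have "2 * r * N = \<bar>Re (X k k)\<bar> + 1"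
      unfolding r_def using cpos by simp
    ultimately show False by linarith
  qed
qed


lemma decomp_aux:
  assumes "p \<le> n" "hermitian_psd n X" "\<forall>i<n. \<forall>j<n. (i < p \<or> j < p) \<longrightarrow> X i j = 0"
  shows "\<exists>(m::nat) V. \<forall>k<n. \<forall>l<n. X k l = (\<Sum>r<m. V r k * cnj (V r l))"
  using assms
proof (induction "n - p" arbitrary: p X)
  case 0
  hence "p = n" by simp
  have Z0: "\<forall>k<n. \<forall>l<n. X k l = 0" using 0(4) \<open>p = n\<close> by blast
  have E0: "\<forall>k<n. \<forall>l<n. X k l = (\<Sum>r<(0::nat). (\<lambda>_ _. 0::complex) r k * cnj ((\<lambda>_ _. 0::complex) r l))"
    using Z0 by simp
  have "\<exists>V. \<forall>k<n. \<forall>l<n. X k l = (\<Sum>r<(0::nat). V r k * cnj (V r l))"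
    using E0 by (rule exI[of "\<lambda>V. \<forall>k<n. \<forall>l<n. X k l = (\<Sum>r<(0::nat). V r k * cnj (V r l))" "\<lambda>_ _. 0"])
  then show ?case by (rule exI[of "\<lambda>m. \<exists>V. \<forall>k<n. \<forall>l<n. X k l = (\<Sum>r<m. V r k * cnj (V r l))" "0::nat"])
next
  case (Suc d)
  hence pn: "p < n" and dd: "d = n - Suc p" and pn': "Suc p \<le> n" by auto
  have herm: "\<And>i j. i < n \<Longrightarrow> j < n \<Longrightarrow> X i j = cnj (X j i)" and pos: "\<And>v. qf n X v \<ge> 0"
  proof -
    have h: "(\<forall>i<n. \<forall>j<n. X i j = cnj (X j i)) \<and> (\<forall>v. qf n X v \<ge> 0)" using Suc.prems(2) psd_qf by blast
    show "\<And>i j. i < n \<Longrightarrow> j < n \<Longrightarrow> X i j = cnj (X j i)" "\<And>v. qf n X v \<ge> 0" using h by blast+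
  qed
  show ?case
  proof (cases "X p p = 0")
    case True
    have "\<forall>i<n. \<forall>j<n. (i < Suc p \<or> j < Suc p) \<longrightarrow> X i j = 0"
    proof (intro allI impI)
      fix i j assume ij: "i < n" "j < n" "i < Suc p \<or> j < Suc p"
      show "X i j = 0"
      proof (cases "i < p \<or> j < p")
        case True then show ?thesis using Suc.prems(3) ij by blast
      next
        case False
        hence "i = p \<or> j = p" using ij by auto
        then show ?thesis
        proof
          assume "i = p" then show ?thesis using psd_zero_diag[OF Suc.prems(2) pn ij(2) True] by simp
        next
          assume "j = p" then show ?thesis using psd_zero_diag[OF Suc.prems(2) pn ij(1) True] herm[OF ij(1,2)] by simp
        qed
      qed
    qed
    then show ?thesis using Suc.hyps(1)[OF dd pn' Suc.prems(2)] by blast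
  next
    case False
    have "qf n X (\<lambda>i. if i = p then 1 else 0) \<ge> 0" by (rule pos)
    hence Xpp0: "X p p \<ge> 0" by (simp add: qf_unit[OF pn])
    define dv where "dv = Re (X p p)"
    have Xpp: "X p p = complex_of_real dv" using Xpp0 unfolding dv_def
      by (simp add: complex_eq_iff complex_ge0_iff)
    have dpos: "dv > 0" using Xpp0 False Xpp unfolding complex_ge0_iff by auto
    define s where "s = sqrt dv"
    have spos: "s > 0" unfolding s_def using dpos by simp
    have ss: "complex_of_real s * complex_of_real s = X p p"
      unfolding Xpp s_def using dpos by (simp flip: of_real_mult)
    define w where "w = (\<lambda>k. X k p / complex_of_real s)"
    define Y where "Y = (\<lambda>k l. X k l - w k * cnj (w l))"
    have hermY: "\<forall>i<n. \<forall>j<n. Y i j = cnj (Y j i)"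
    proof (intro allI impI)
      fix i j assume "i < n" "j < n"
      then show "Y i j = cnj (Y j i)" unfolding Y_def using herm[of i j] by simp
    qed
    have posY: "qf n Y v \<ge> 0" for v
    proof -
      define \<sigma> where "\<sigma> = (\<Sum>j<n. X p j * v j)"
      have s2: "(\<Sum>i<n. cnj (v i) * X i p) = cnj \<sigma>"
      proof -
        have "cnj \<sigma> = (\<Sum>i<n. cnj (X p i) * cnj (v i))" unfolding \<sigma>_def by simp
        also have "\<dots> = (\<Sum>i<n. cnj (v i) * X i p)"
          by (rule sum.cong) (use herm[OF _ pn] in auto)
        finally show ?thesis by simp
      qed
      have A1: "(\<Sum>i<n. cnj (v i) * w i) = cnj \<sigma> / complex_of_real s"
        unfolding w_def s2[symmetric] by (simp add: sum_divide_distrib)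
      have A2: "(\<Sum>j<n. cnj (w j) * v j) = \<sigma> / complex_of_real s"
        unfolding w_def \<sigma>_def sum_divide_distrib
        by (rule sum.cong) (use herm[OF pn] in auto)
      have e1: "(\<Sum>i<n. \<Sum>j<n. cnj (v i) * w i * (cnj (w j) * v j)) = (\<Sum>i<n. cnj (v i) * w i) * (\<Sum>j<n. cnj (w j) * v j)"
        by (simp add: sum_product)
      have "qf n Y v = qf n X v - (\<Sum>i<n. cnj (v i) * w i) * (\<Sum>j<n. cnj (w j) * v j)"
        unfolding e1[symmetric] qf_def Y_def by (simp add: right_diff_distrib left_diff_distrib sum_subtractf mult.assoc)
      also have "\<dots> = qf n X v - cnj \<sigma> * \<sigma> / X p p"
        unfolding A1 A2 ss[symmetric] by simp
      also have "\<dots> = qf n X (\<lambda>i. v i + (if i = p then - \<sigma> / X p p else 0))"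
        unfolding qf_update[OF pn] s2 \<sigma>_def[symmetric]
        using False Xpp by (simp add: field_simps)
      finally show ?thesis using pos by simp
    qed
    have psdY: "hermitian_psd n Y" unfolding psd_qf using hermY posY by blast
    have zY: "\<forall>i<n. \<forall>j<n. (i < Suc p \<or> j < Suc p) \<longrightarrow> Y i j = 0"
    proof (intro allI impI)
      fix i j assume ij: "i < n" "j < n" "i < Suc p \<or> j < Suc p"
      have sne: "complex_of_real s \<noteq> 0" using spos by simp
      have ssc: "cnj (complex_of_real s) = complex_of_real s" by simp
      show "Y i j = 0"
      proof (cases "i < p \<or> j < p")
        case True
        hence "X i j = 0" using Suc.prems(3) ij by blast
        moreover have "w i = 0 \<or> w j = 0"
          using True Suc.prems(3) ij pn unfolding w_def by auto
        ultimately show ?thesis unfolding Y_def by auto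
      next
        case F: False
        hence "i = p \<or> j = p" using ij by auto
        then show ?thesis
        proof
          assume ip: "i = p"
          have "w p * cnj (w j) = X p p * cnj (X j p) / (complex_of_real s * complex_of_real s)"
            unfolding w_def by simp
          also have "\<dots> = X p j" using herm[OF pn ij(2)] ss False by simp
          finally show ?thesis unfolding Y_def ip by simp
        next
          assume jp: "j = p"
          have "w i * cnj (w p) = X i p * cnj (X p p) / (complex_of_real s * complex_of_real s)"
            unfolding w_def by simp
          also have "\<dots> = X i p" using Xpp ss False by simp
          finally show ?thesis unfolding Y_def jp by simp
        qed
      qed
    qed
    have exY: "\<exists>(m::nat) V. \<forall>k<n. \<forall>l<n. Y k l = (\<Sum>r<m. V r k * cnj (V r l))"
      by (rule Suc.hyps(1)[OF dd pn' psdY zY])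
    then obtain m :: nat and V where mV: "\<forall>k<n. \<forall>l<n. Y k l = (\<Sum>r<m. V r k * cnj (V r l))"
      by blast
    define V' where "V' = V(m := w)"
    have "\<forall>k<n. \<forall>l<n. X k l = (\<Sum>r<Suc m. V' r k * cnj (V' r l))"
    proof (intro allI impI)
      fix k l assume kl: "k < n" "l < n"
      have "(\<Sum>r<Suc m. V' r k * cnj (V' r l)) = (\<Sum>r<m. V r k * cnj (V r l)) + w k * cnj (w l)"
        unfolding V'_def by (simp add: sum.lessThan_Suc)
      also have "\<dots> = X k l" using mV[rule_format, OF kl] unfolding Y_def by (simp add: algebra_simps)
      finally show "X k l = (\<Sum>r<Suc m. V' r k * cnj (V' r l))" by simp
    qed
    then show ?thesis by (intro exI)
  qed
qed

lemma decomp: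
  assumes "hermitian_psd n X"
  shows "\<exists>(m::nat) V. \<forall>k<n. \<forall>l<n. X k l = (\<Sum>r<m. V r k * cnj (V r l))"
  using decomp_aux[of 0 n X] assms by simp



definition G :: "nat \<Rightarrow> (nat \<Rightarrow> nat \<Rightarrow> nat \<Rightarrow> nat \<Rightarrow> complex) \<Rightarrow> (nat \<Rightarrow> complex) \<Rightarrow> (nat \<Rightarrow> complex) \<Rightarrow> (nat \<Rightarrow> complex) \<Rightarrow> (nat \<Rightarrow> complex) \<Rightarrow> complex" where
  "G n A a b c d = (\<Sum>i<n. \<Sum>j<n. \<Sum>k<n. \<Sum>l<n. A i j k l * a i * b j * cnj (c k) * cnj (d l))"

lemma sw12: "(\<Sum>i<n. \<Sum>j<n. \<Sum>k<n. \<Sum>l<n. F i j k l) = (\<Sum>i<n. \<Sum>j<n. \<Sum>k<n. \<Sum>l<n. (F j i k l::complex))"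
  by (rule sum.swap)
lemma sw23: "(\<Sum>i<n. \<Sum>j<n. \<Sum>k<n. \<Sum>l<n. F i j k l) = (\<Sum>i<n. \<Sum>j<n. \<Sum>k<n. \<Sum>l<n. (F i k j l::complex))"
  by (rule sum.cong[OF refl], rule sum.swap)
lemma sw34: "(\<Sum>i<n. \<Sum>j<n. \<Sum>k<n. \<Sum>l<n. F i j k l) = (\<Sum>i<n. \<Sum>j<n. \<Sum>k<n. \<Sum>l<n. (F i j l k::complex))"
  by (rule sum.cong[OF refl], rule sum.cong[OF refl], rule sum.swap)

lemma sum4_cong: "(\<And>i j k l. i<n \<Longrightarrow> j<n \<Longrightarrow> k<n \<Longrightarrow> l<n \<Longrightarrow> F i j k l = F' i j k l) \<Longrightarrow>
   (\<Sum>i<n. \<Sum>j<n. \<Sum>k<n. \<Sum>l<n. F i j k l) = (\<Sum>i<n. \<Sum>j<n. \<Sum>k<n. \<Sum>l<n. (F' i j k l::complex))"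
  by (intro sum.cong refl) simp

lemma pull4: "(\<Sum>r\<in>R. \<Sum>i<n. \<Sum>j<n. \<Sum>k<n. \<Sum>l<n. H r i j k l) = (\<Sum>i<n. \<Sum>j<n. \<Sum>k<n. \<Sum>l<n. \<Sum>r\<in>R. (H r i j k l::complex))"
  apply (subst sum.swap[where A=R])
  apply (rule sum.cong[OF refl])
  apply (subst sum.swap[where A=R])
  apply (rule sum.cong[OF refl])
  apply (subst sum.swap[where A=R])
  apply (rule sum.cong[OF refl])
  apply (subst sum.swap[where A=R])
  apply (rule refl)
  done

lemma symA:
  assumes "symmetric_tensor n A" "i<n" "j<n" "k<n" "l<n"
  shows "A i j k l = A j k i l" "A i j k l = A i j l k"
proof -
  have h1: "A i j k l = A j i k l" using assms unfolding symmetric_tensor_def by blast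
  have h2: "A j i k l = A j k i l" using assms unfolding symmetric_tensor_def by blast
  show "A i j k l = A j k i l" using h1 h2 by simp
  show "A i j k l = A i j l k" using assms unfolding symmetric_tensor_def by blast
qed

lemma G_sym34:
  assumes "symmetric_tensor n A"
  shows "G n A a b c d = G n A a b d c"
proof -
  have "G n A a b d c = (\<Sum>i<n. \<Sum>j<n. \<Sum>k<n. \<Sum>l<n. A i j l k * a i * b j * cnj (d l) * cnj (c k))"
    unfolding G_def by (rule sw34)
  also have "\<dots> = G n A a b c d" unfolding G_def
    apply (rule sum4_cong)
    subgoal for i j k l using symA(2)[OF assms, of i j k l] by (simp add: mult_ac)
    done
  finally show ?thesis by simp
qed

lemma tf_G: "tensor_form n A x = G n A x x x x"
  unfolding tensor_form_def G_def by simp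

lemma G_expand:
  "G n A (\<lambda>i. \<Sum>a\<in>R. \<alpha> a * u a i) (\<lambda>i. \<Sum>b\<in>R. \<alpha> b * u b i) (\<lambda>i. \<Sum>c\<in>R. \<alpha> c * u c i) (\<lambda>i. \<Sum>d\<in>R. \<alpha> d * u d i)
   = (\<Sum>a\<in>R. \<Sum>b\<in>R. \<Sum>c\<in>R. \<Sum>d\<in>R. \<alpha> a * \<alpha> b * cnj (\<alpha> c) * cnj (\<alpha> d) * G n A (u a) (u b) (u c) (u d))"
  unfolding G_def by (simp add: sum_distrib_left sum_distrib_right pull4 mult_ac)



lemma tmi_decomp:
  assumes sym: "symmetric_tensor n A" and XV: "\<forall>k<n. \<forall>l<n. X k l = (\<Sum>r<m. V r k * cnj (V r l))"
  shows "tensor_matrix_inner n X A = (\<Sum>r<m. \<Sum>s<m. G n A (V s) (V r) (V s) (V r))"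
proof -
  have "tensor_matrix_inner n X A = (\<Sum>i<n. \<Sum>j<n. \<Sum>k<n. \<Sum>l<n.
          \<Sum>r<m. \<Sum>s<m. A i j k l * V r k * cnj (V r l) * cnj (V s i) * V s j)"
    unfolding tensor_matrix_inner_def
    apply (rule sum4_cong)
    subgoal for i j k l using XV by (simp add: sum_distrib_left sum_distrib_right mult_ac)
    done
  also have "\<dots> = (\<Sum>r<m. \<Sum>i<n. \<Sum>j<n. \<Sum>k<n. \<Sum>l<n.
          \<Sum>s<m. A i j k l * V r k * cnj (V r l) * cnj (V s i) * V s j)"
    by (rule pull4[symmetric])
  also have "\<dots> = (\<Sum>r<m. \<Sum>s<m. \<Sum>i<n. \<Sum>j<n. \<Sum>k<n. \<Sum>l<n.
          A i j k l * V r k * cnj (V r l) * cnj (V s i) * V s j)"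
    by (rule sum.cong[OF refl], rule pull4[symmetric])
  also have "\<dots> = (\<Sum>r<m. \<Sum>s<m. G n A (V s) (V r) (V s) (V r))"
  proof (rule sum.cong[OF refl], rule sum.cong[OF refl])
    fix r s
    define F where "F = (\<lambda>a b c d. A a b c d * V s a * V r b * cnj (V s c) * cnj (V r d))"
    have "(\<Sum>i<n. \<Sum>j<n. \<Sum>k<n. \<Sum>l<n. A i j k l * V r k * cnj (V r l) * cnj (V s i) * V s j)
        = (\<Sum>i<n. \<Sum>j<n. \<Sum>k<n. \<Sum>l<n. F j k i l)"
      apply (rule sum4_cong)
      subgoal for i j k l using symA(1)[OF sym, of i j k l] unfolding F_def by (simp add: mult_ac)
      done
    also have "\<dots> = (\<Sum>i<n. \<Sum>j<n. \<Sum>k<n. \<Sum>l<n. F i k j l)"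
      using sw12[of "\<lambda>i j k l. F j k i l" n] by simp
    also have "\<dots> = (\<Sum>i<n. \<Sum>j<n. \<Sum>k<n. \<Sum>l<n. F i j k l)"
      using sw23[of "\<lambda>i j k l. F i k j l" n] by simp
    also have "\<dots> = G n A (V s) (V r) (V s) (V r)"
      unfolding F_def G_def ..
    finally show "(\<Sum>i<n. \<Sum>j<n. \<Sum>k<n. \<Sum>l<n. A i j k l * V r k * cnj (V r l) * cnj (V s i) * V s j)
        = G n A (V s) (V r) (V s) (V r)" .
  qed
  finally show ?thesis .
qed

lemma cnj_ii_pow: "cnj (\<i> ^ e) = \<i> ^ (3 * e)"
proof -
  have "\<i> ^ (3 * e) = (\<i> ^ 3) ^ e" by (simp add: power_mult)
  also have "\<i> ^ 3 = - \<i>" by (simp add: numeral_3_eq_3)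
  finally show ?thesis by simp
qed

lemma ii_sum4: "(\<Sum>e<(4::nat). \<i> ^ (e * c)) = (if 4 dvd c then 4 else 0)"
proof -
  obtain q r where c: "c = 4 * q + r" and r: "r < 4" by (metis mod_less_divisor div_mult_mod_eq mult.commute zero_less_numeral)
  have p: "\<i> ^ (e * c) = \<i> ^ (e * r)" for e
  proof -
    have "\<i> ^ (e * c) = (\<i> ^ 4) ^ (e * q) * \<i> ^ (e * r)"
      unfolding c by (simp add: algebra_simps power_add power_mult[symmetric])
    also have "\<i> ^ 4 = (1::complex)" by (simp add: power_mult[symmetric, of _ 2 2, simplified])
    finally show ?thesis by simp
  qed
  have d: "4 dvd c \<longleftrightarrow> r = 0" unfolding c using r by presburger
  have s: "{..<(4::nat)} = {0,1,2,3}" by auto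
  have "r = 0 \<or> r = 1 \<or> r = 2 \<or> r = 3" using r by auto
  then show ?thesis unfolding p d s
    by (elim disjE) (simp_all add: power_mult[symmetric] numeral_3_eq_3 eval_nat_numeral)
qed



definition coef :: "nat \<Rightarrow> nat \<Rightarrow> nat \<Rightarrow> nat \<Rightarrow> complex" where
  "coef a b c d = (if c = a then if d = b then 1 else 0 else 0) + (if d = a then if c = b then 1 else 0 else 0)
     - (if b = a then if c = a then if d = a then 1 else 0 else 0 else 0)"

definition cnt :: "nat \<Rightarrow> nat \<Rightarrow> nat \<Rightarrow> nat \<Rightarrow> nat \<Rightarrow> nat" where
  "cnt a b c d r = (if r = a then 1 else 0) + (if r = b then 1 else 0) + 3 * (if r = c then 1 else 0) + 3 * (if r = d then 1 else 0)"

lemma cnt_sum: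
  assumes "a<m" "b<m" "c<m" "d<m"
  shows "(\<Sum>r<m. \<epsilon> r * cnt a b c d r) = \<epsilon> a + \<epsilon> b + 3 * \<epsilon> c + 3 * \<epsilon> d"
proof -
  have "(\<Sum>r<m. \<epsilon> r * cnt a b c d r) = (\<Sum>r<m. (if r = a then \<epsilon> r else 0)) + (\<Sum>r<m. (if r = b then \<epsilon> r else 0))
     + 3 * (\<Sum>r<m. (if r = c then \<epsilon> r else 0)) + 3 * (\<Sum>r<m. (if r = d then \<epsilon> r else 0))"
  proof -
    have pt: "\<epsilon> r * cnt a b c d r = (if r = a then \<epsilon> r else 0) + (if r = b then \<epsilon> r else 0)
      + 3 * (if r = c then \<epsilon> r else 0) + 3 * (if r = d then \<epsilon> r else 0)" for r
      unfolding cnt_def by (simp add: algebra_simps)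
    show ?thesis by (simp only: pt sum.distrib sum_distrib_left[symmetric])
  qed
  then show ?thesis using assms by simp
qed

lemma Q_iff:
  "(4 dvd cnt a b c d a \<and> 4 dvd cnt a b c d b \<and> 4 dvd cnt a b c d c \<and> 4 dvd cnt a b c d d)
     \<longleftrightarrow> ((c = a \<and> d = b) \<or> (d = a \<and> c = b))"
  by (cases "a=b"; cases "a=c"; cases "a=d"; cases "b=c"; cases "b=d"; cases "c=d"; simp add: cnt_def)

lemma Q_all:
  assumes "(c = a \<and> d = b) \<or> (d = a \<and> c = b)"
  shows "4 dvd cnt a b c d r"
  using assms by (cases "r=a"; cases "r=b"; auto simp: cnt_def)

lemma coef_Q: "coef a b c d = (if (c = a \<and> d = b) \<or> (d = a \<and> c = b) then 1 else 0)"
  unfolding coef_def by auto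

lemma phase:
  assumes "a<m" "b<m" "c<m" "d<m"
  shows "(\<Sum>\<epsilon>\<in>PiE {..<m} (\<lambda>_. {..<4::nat}). \<i>^(\<epsilon> a) * \<i>^(\<epsilon> b) * cnj (\<i>^(\<epsilon> c)) * cnj (\<i>^(\<epsilon> d)))
     = 4^m * coef a b c d"
proof -
  have t: "\<i>^(\<epsilon> a) * \<i>^(\<epsilon> b) * cnj (\<i>^(\<epsilon> c)) * cnj (\<i>^(\<epsilon> d)) = (\<Prod>r<m. \<i>^(\<epsilon> r * cnt a b c d r))" for \<epsilon>
    unfolding cnj_ii_pow power_sum[symmetric] cnt_sum[OF assms] by (simp add: power_add)
  have "(\<Sum>\<epsilon>\<in>PiE {..<m} (\<lambda>_. {..<4::nat}). \<i>^(\<epsilon> a) * \<i>^(\<epsilon> b) * cnj (\<i>^(\<epsilon> c)) * cnj (\<i>^(\<epsilon> d)))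
      = (\<Sum>\<epsilon>\<in>PiE {..<m} (\<lambda>_. {..<4::nat}). \<Prod>r<m. \<i>^(\<epsilon> r * cnt a b c d r))"
    by (simp only: t)
  also have "\<dots> = (\<Prod>r<m. \<Sum>e<(4::nat). \<i>^(e * cnt a b c d r))"
    by (rule prod_sum_PiE[symmetric]) simp_all
  also have "\<dots> = (\<Prod>r<m. if 4 dvd cnt a b c d r then 4 else 0)"
    by (simp add: ii_sum4)
  also have "\<dots> = 4^m * coef a b c d"
  proof (cases "(c = a \<and> d = b) \<or> (d = a \<and> c = b)")
    case True
    have "(\<Prod>r<m. if 4 dvd cnt a b c d r then 4 else 0) = (\<Prod>r<m. (4::complex))"
      using Q_all[OF True] by simp
    then show ?thesis using True by (simp add: coef_Q)
  next
    case False
    hence "\<not> (4 dvd cnt a b c d a \<and> 4 dvd cnt a b c d b \<and> 4 dvd cnt a b c d c \<and> 4 dvd cnt a b c d d)"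
      using Q_iff by blast
    then obtain r where r: "r < m" "\<not> 4 dvd cnt a b c d r" using assms by blast
    have z: "(\<Prod>r<m. if 4 dvd cnt a b c d r then 4 else 0) = (0::complex)"
      by (rule prod_zero) (use r in auto)
    show ?thesis using False unfolding z coef_Q by simp
  qed
  finally show ?thesis .
qed



lemma coef_sum:
  assumes sym: "symmetric_tensor n A"
  shows "(\<Sum>a<m. \<Sum>b<m. \<Sum>c<m. \<Sum>d<m. coef a b c d * G n A (V a) (V b) (V c) (V d))
    = 2 * (\<Sum>a<m. \<Sum>b<m. G n A (V a) (V b) (V a) (V b)) - (\<Sum>a<m. tensor_form n A (V a))"
proof -
  define g where "g = (\<lambda>a b c d. G n A (V a) (V b) (V c) (V d))"
  have pw: "coef a b c d * g a b c d = (if c = a then if d = b then g a b c d else 0 else 0)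
     + (if d = a then if c = b then g a b c d else 0 else 0)
     - (if b = a then if c = a then if d = a then g a b c d else 0 else 0 else 0)" for a b c d
    unfolding coef_def by (simp add: algebra_simps)
  have "(\<Sum>a<m. \<Sum>b<m. \<Sum>c<m. \<Sum>d<m. coef a b c d * g a b c d)
     = (\<Sum>a<m. \<Sum>b<m. g a b a b) + (\<Sum>a<m. \<Sum>b<m. g a b b a) - (\<Sum>a<m. g a a a a)"
    by (simp add: pw sum.distrib sum_subtractf sum_if0)
  also have "(\<Sum>a<m. \<Sum>b<m. g a b b a) = (\<Sum>a<m. \<Sum>b<m. g a b a b)"
    unfolding g_def using G_sym34[OF sym] by simp
  also have "(\<Sum>a<m. g a a a a) = (\<Sum>a<m. tensor_form n A (V a))"
    unfolding g_def tf_G ..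
  finally show ?thesis unfolding g_def by simp
qed

lemma E_formula:
  assumes sym: "symmetric_tensor n A"
  shows "(\<Sum>\<epsilon>\<in>PiE {..<m} (\<lambda>_. {..<4::nat}). tensor_form n A (\<lambda>i. \<Sum>r<m. \<i>^(\<epsilon> r) * V r i))
    = 4^m * (2 * (\<Sum>a<m. \<Sum>b<m. G n A (V a) (V b) (V a) (V b)) - (\<Sum>a<m. tensor_form n A (V a)))"
proof -
  let ?P = "PiE {..<m} (\<lambda>_. {..<4::nat})"
  have "(\<Sum>\<epsilon>\<in>?P. tensor_form n A (\<lambda>i. \<Sum>r<m. \<i>^(\<epsilon> r) * V r i))
     = (\<Sum>\<epsilon>\<in>?P. \<Sum>a<m. \<Sum>b<m. \<Sum>c<m. \<Sum>d<m.
          \<i>^(\<epsilon> a) * \<i>^(\<epsilon> b) * cnj (\<i>^(\<epsilon> c)) * cnj (\<i>^(\<epsilon> d)) * G n A (V a) (V b) (V c) (V d))"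
    unfolding tf_G by (rule sum.cong[OF refl], rule G_expand)
  also have "\<dots> = (\<Sum>a<m. \<Sum>b<m. \<Sum>c<m. \<Sum>d<m. \<Sum>\<epsilon>\<in>?P.
          \<i>^(\<epsilon> a) * \<i>^(\<epsilon> b) * cnj (\<i>^(\<epsilon> c)) * cnj (\<i>^(\<epsilon> d)) * G n A (V a) (V b) (V c) (V d))"
    by (rule pull4)
  also have "\<dots> = (\<Sum>a<m. \<Sum>b<m. \<Sum>c<m. \<Sum>d<m.
          (4^m * coef a b c d) * G n A (V a) (V b) (V c) (V d))"
    apply (rule sum4_cong)
    subgoal for a b c d using phase[of a m b c d] by (simp add: sum_distrib_right[symmetric])
    done
  also have "\<dots> = 4^m * (\<Sum>a<m. \<Sum>b<m. \<Sum>c<m. \<Sum>d<m. coef a b c d * G n A (V a) (V b) (V c) (V d))"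
    by (simp add: sum_distrib_left mult.assoc)
  also have "\<dots> = 4^m * (2 * (\<Sum>a<m. \<Sum>b<m. G n A (V a) (V b) (V a) (V b)) - (\<Sum>a<m. tensor_form n A (V a)))"
    using coef_sum[OF sym] by simp
  finally show ?thesis .
qed



theorem theorem5p6:
  fixes n :: nat and A :: "nat \<Rightarrow> nat \<Rightarrow> nat \<Rightarrow> nat \<Rightarrow> complex"
  assumes "CPS_tensor n A" and "symmetric_tensor n A"
  shows "(\<forall>x :: nat \<Rightarrow> complex. tensor_form n A x \<ge> 0) \<longleftrightarrow>
         (\<forall>X :: nat \<Rightarrow> nat \<Rightarrow> complex. hermitian_psd n X \<longrightarrow> tensor_matrix_inner n X A \<ge> 0)"
proof
  assume F: "\<forall>x :: nat \<Rightarrow> complex. tensor_form n A x \<ge> 0"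
  show "\<forall>X :: nat \<Rightarrow> nat \<Rightarrow> complex. hermitian_psd n X \<longrightarrow> tensor_matrix_inner n X A \<ge> 0"
  proof (intro allI impI)
    fix X :: "nat \<Rightarrow> nat \<Rightarrow> complex"
    assume "hermitian_psd n X"
    from decomp[OF this] obtain m :: nat and V where XV: "\<forall>k<n. \<forall>l<n. X k l = (\<Sum>r<m. V r k * cnj (V r l))"
      by blast
    define T where "T = (\<Sum>a<m. \<Sum>b<m. G n A (V a) (V b) (V a) (V b))"
    define P where "P = (\<Sum>a<m. tensor_form n A (V a))"
    define E where "E = (\<Sum>\<epsilon>\<in>PiE {..<m} (\<lambda>_. {..<4::nat}). tensor_form n A (\<lambda>i. \<Sum>r<m. \<i>^(\<epsilon> r) * V r i))"
    have tmi: "tensor_matrix_inner n X A = T"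
      unfolding T_def tmi_decomp[OF assms(2) XV] by (rule sum.swap)
    have E0: "E \<ge> 0" unfolding E_def by (rule sum_nonneg) (use F in blast)
    have P0: "P \<ge> 0" unfolding P_def by (rule sum_nonneg) (use F in blast)
    have EF: "E = 4^m * (2 * T - P)" unfolding E_def T_def P_def by (rule E_formula[OF assms(2)])
    have c4: "(4::complex)^m = complex_of_real (4^m)" by simp
    have k: "E + 4^m * P = complex_of_real (2 * 4^m) * T"
      unfolding EF c4 by (simp add: algebra_simps)
    have nz: "complex_of_real (2 * 4^m) \<noteq> 0" by simp
    have Tq: "T = (E + 4^m * P) / complex_of_real (2 * 4^m)"
      unfolding k by (rule nonzero_mult_div_cancel_left[OF nz, symmetric])
    have p4: "(0::complex) \<le> 4^m" unfolding c4 complex_ge0_iff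
      by (simp only: Re_complex_of_real Im_complex_of_real) simp
    have Q0: "E + 4^m * P \<ge> 0"
      by (rule add_nonneg_nonneg[OF E0 mult_nonneg_nonneg[OF p4 P0]])
    have ReT: "Re T = Re (E + 4^m * P) / (2 * 4^m)" unfolding Tq by (rule Re_divide_of_real)
    have ImT: "Im T = Im (E + 4^m * P) / (2 * 4^m)" unfolding Tq by (rule Im_divide_of_real)
    have "Re (E + 4^m * P) \<ge> 0" "Im (E + 4^m * P) = 0" using Q0 unfolding complex_ge0_iff by auto
    then have "T \<ge> 0" unfolding complex_ge0_iff ReT ImT by simp
    then show "tensor_matrix_inner n X A \<ge> 0" unfolding tmi .
  qed
next
  assume H: "\<forall>X :: nat \<Rightarrow> nat \<Rightarrow> complex. hermitian_psd n X \<longrightarrow> tensor_matrix_inner n X A \<ge> 0"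
  show "\<forall>x :: nat \<Rightarrow> complex. tensor_form n A x \<ge> 0"
  proof
    fix x :: "nat \<Rightarrow> complex"
    define X where "X = (\<lambda>k l. x k * cnj (x l))"
    have psd: "hermitian_psd n X"
      unfolding psd_qf
    proof (intro conjI allI impI)
      fix i j assume "i < n" "j < n"
      show "X i j = cnj (X j i)" unfolding X_def by simp
    next
      fix v :: "nat \<Rightarrow> complex"
      define s where "s = (\<Sum>i<n. cnj (v i) * x i)"
      have ss: "s * cnj s = (\<Sum>i<n. \<Sum>j<n. cnj (v i) * x i * (v j * cnj (x j)))"
        unfolding s_def by (simp add: sum_product)
      have "qf n X v = s * cnj s"
        unfolding ss qf_def X_def by (simp add: mult_ac)
      also have "\<dots> = complex_of_real ((Re s)^2 + (Im s)^2)" by (rule complex_mult_cnj)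
      finally show "qf n X v \<ge> 0" by (simp add: complex_ge0_iff)
    qed
    have XV: "\<forall>k<n. \<forall>l<n. X k l = (\<Sum>r<(1::nat). (\<lambda>_. x) r k * cnj ((\<lambda>_. x) r l))"
      unfolding X_def by simp
    have "tensor_matrix_inner n X A = tensor_form n A x"
      using tmi_decomp[OF assms(2) XV] by (simp add: tf_G)
    then show "tensor_form n A x \<ge> 0" using H psd by metis
  qed
qed


end
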